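(* Let $m$ be a positive integer with $m\neq2^\beta$ for every integer $\beta\ge0$, let $T=2^{\lceil\lg m\rceil}-m-1$, and let $i\ge0$ be an integer. If $\varepsilon$ is a real number with $\frac{T+1}{2}+\frac{im}{2}\le\varepsilon<\frac{T+1}{2}+\frac{(i+1)m}{2}$, then $\ell_m(\varepsilon)=2+i+\lfloor\lg m\rfloor$.
   Context: $\lg$ denotes $\log_2$. The generalized Rice mapping $M:\mathbb{R}\to\mathbb{Z}_{\ge0}$ is $M(\varepsilon)=\lfloor 2\varepsilon\rfloor$ if $\varepsilon\ge0$ and $M(\varepsilon)=-\lfloor2\varepsilon\rfloor-1$ if $\varepsilon<0$. For a positive integer $m$, the Golomb codeword of a non-negative integer $N$ consists of $j=\lfloor N/m\rfloor$ in unary ($j+1$ bits) followed by $k=N\bmod m$ in minimal binary, which uses $\lfloor\lg m\rfloor$ bits if $k<2^{\lceil\lg m\rceil}-m$ and $\lceil\lg m\rceil$ bits otherwise; $\lambda_m(N)$ is the total number of bits. The code length of a real residual $\varepsilon$ is $\ell_m(\varepsilon)=\lambda_m(M(\varepsilon))$. *)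

theory Defs
  imports Complex_Main
begin

definition rice_map :: "real \<Rightarrow> nat" where
  "rice_map \<epsilon> = (if \<epsilon> \<ge> 0 then nat \<lfloor>2 * \<epsilon>\<rfloor> else nat (- \<lfloor>2 * \<epsilon>\<rfloor> - 1))"

definition flg :: "nat \<Rightarrow> nat" where
  "flg m = nat \<lfloor>log 2 (real m)\<rfloor>"

definition clg :: "nat \<Rightarrow> nat" where
  "clg m = nat \<lceil>log 2 (real m)\<rceil>"

definition golomb_len :: "nat \<Rightarrow> nat \<Rightarrow> nat" where
  "golomb_len m N = (let j = N div m; k = N mod m in
     (j + 1) + (if k < 2 ^ clg m - m then flg m else clg m))"

definition code_len :: "nat \<Rightarrow> real \<Rightarrow> nat" where
  "code_len m \<epsilon> = golomb_len m (rice_map \<epsilon>)"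

end

theory Submission
  imports Defs
begin

theorem lemma1:
  fixes m i :: nat and \<epsilon> :: real and T :: int
  assumes "m > 0"
    and "\<forall>\<beta>::nat. m \<noteq> 2 ^ \<beta>"
    and "T = 2 ^ clg m - int m - 1"
    and "(real_of_int T + 1) / 2 + real i * real m / 2 \<le> \<epsilon>"
    and "\<epsilon> < (real_of_int T + 1) / 2 + real (i + 1) * real m / 2"
  shows "code_len m \<epsilon> = 2 + i + flg m"
proof -
  obtain f where f1: "2^f \<le> m" and f2: "m < 2^(f+1)"
    using ex_power_ivl1[of 2 m] assms(1) by auto
  have f1': "2^f < m" using f1 assms(2) by (metis le_neq_implies_less)
  have fl: "flg m = f"
  proof -
    have "\<lfloor>log 2 (real m)\<rfloor> = int f" using floor_log_nat_eq_powr_iff[of 2 m f] f1 f2 assms(1) by simp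
    thus ?thesis unfolding flg_def by simp
  qed
  have cl: "clg m = f + 1"
  proof -
    have "\<lceil>log 2 (real m)\<rceil> = int f + 1" using ceiling_log_nat_eq_powr_iff[of 2 m f] f1' f2 assms(1) by simp
    thus ?thesis unfolding clg_def by simp
  qed
  define A where "A = 2^(f+1) - m"
  have A1: "A \<ge> 1" and A2: "A < m" using f1' f2 unfolding A_def by auto
  have TA: "real_of_int T + 1 = real A"
    using assms(3) cl f2 unfolding A_def by (simp add: of_nat_diff)
  define N where "N = rice_map \<epsilon>"
  have epos: "\<epsilon> > 0"
  proof -
    have "real A \<ge> 1" using A1 by simp
    moreover have "real i * real m / 2 \<ge> 0" by simp
    moreover have "real A / 2 + real i * real m / 2 \<le> \<epsilon>" using assms(4) TA by simp
    ultimately show ?thesis by (smt (verit) field_sum_of_halves)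
  qed
  have lo: "real (A + i*m) \<le> 2*\<epsilon>" using assms(4) TA by simp
  have hi: "2*\<epsilon> < real (A + (i+1)*m)" using assms(5) TA by (simp add: field_simps)
  have Nf: "int N = \<lfloor>2*\<epsilon>\<rfloor>"
    unfolding N_def rice_map_def using epos by simp
  have N1: "A + i*m \<le> N"
  proof -
    have "int (A + i*m) \<le> \<lfloor>2*\<epsilon>\<rfloor>" using lo by (simp add: le_floor_iff)
    thus ?thesis using Nf by linarith
  qed
  have N2: "N < A + (i+1)*m"
  proof -
    have "\<lfloor>2*\<epsilon>\<rfloor> < int (A + (i+1)*m)" using hi by (simp add: floor_less_iff)
    thus ?thesis using Nf by linarith
  qed
  define r where "r = N - (A + i*m)"
  have im: "(i+1)*m = i*m + m" by simp
  have r: "N = A + i*m + r" "r < m" using N1 N2 unfolding r_def im by linarith+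
  have cf: "2 ^ clg m - m = A" using cl A_def by simp
  show ?thesis
  proof (cases "r < m - A")
    case True
    have e: "N = (A + r) + i*m" using r by simp
    have lt: "A + r < m" using True by linarith
    have d: "N div m = i" using e lt by simp
    have mo: "N mod m = A + r" using e lt by simp
    show ?thesis
      unfolding code_len_def N_def[symmetric] golomb_len_def Let_def cf
      using cl fl d mo by simp
  next
    case False
    have e: "N = (A + r - m) + (i+1)*m" using r False A2 by (simp add: algebra_simps)
    have lt: "A + r - m < m" using r(2) A2 by linarith
    have d0: "N div m = (i+1) + (A+r-m) div m" unfolding e
      by (rule div_mult_self1) (use assms(1) in simp)
    have d: "N div m = i + 1" using d0 lt by simp
    have mo0: "N mod m = (A+r-m) mod m" unfolding e by (rule mod_mult_self1)
    have mo: "N mod m = A + r - m" using mo0 lt by simp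
    show ?thesis
      unfolding code_len_def N_def[symmetric] golomb_len_def Let_def cf
      using cl fl d mo False r(2) A2 by simp
  qed
qed

end
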